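(* Let $G$ and $H$ be countable discrete groups, let $(X,\mu)$ be a standard probability space and let $(\mathsf{A},\mathsf{B})$ be an ergodic p.m.p. action of $G\times H$ on $(X,\mu)$. Then the synergodic decomposition of $(\mathsf{A},\mathsf{B})$ is isomorphic, as a factor of $(\mathsf{A},\mathsf{B})$, to the local product \[(\mathsf{E}_{\mathsf{A}\curvearrowright\mathsf{B}}) \boxdot (\mathsf{E}_{\mathsf{B}\curvearrowright\mathsf{A}}) \] acting on $(E_{\mathsf{A}}\times E_{\mathsf{B}},\eta_{\mathsf{A}}\times\eta_{\mathsf{B}})$.
   Context: All groups are countable and discrete. For a standard probability space $(X,\mu)$, $\mathcal{M}_X$ is the $\sigma$-algebra of measurable sets, $\mathcal{N}_X=\{D\in\mathcal{M}_X:\mu(D)\in\{0,1\}\}$, and $\mathrm{Aut}(X,\mu)$ is the group of measure-preserving transformations (identified when equal a.e.). A p.m.p. action of $G$ is a homomorphism $\mathsf{A}:G\to\mathrm{Aut}(X,\mu)$, $g\mapsto \mathsf{A}^g$. A p.m.p. action of $G\times H$ is written as a pair $(\mathsf{A},\mathsf{B})$ of commuting actions of $G$ and of $H$ on $(X,\mu)$. A set $D$ is $\mathsf{A}$-invariant if $\mu(\mathsf{A}^gD\triangle D)=0$ for all $g$; $\mathcal{E}_{\mathsf{A}}$ denotes the $\sigma$-algebra of $\mathsf{A}$-invariant sets; $\mathsf{A}$ is ergodic if $\mathcal{E}_{\mathsf{A}}=\mathcal{N}_X$. A factor map from $\mathsf{A}$ (on $(X,\mu)$) onto $\mathsf{C}$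 (on $(Y,\nu)$) is a measurable surjection $\Phi$ with $\Phi_\#\mu=\nu$ and $\Phi\circ\mathsf{A}^g=\mathsf{C}^g\circ\Phi$; a sub-$\sigma$-algebra $\mathcal{S}$ is $\mathsf{A}$-stable if $\{\mathsf{A}^g D : D \in \mathcal{S}\}=\mathcal{S}$ for all $g$, and every stable $\sigma$-algebra $\mathcal{S}$ has a realization, i.e. a factor $\Phi$ with $\mathcal{S}=\{\Phi^{-1}(D)\}$, unique up to isomorphism of factors (two factors $\Phi:X\to Y$, $\Omega:X\to Z$ are isomorphic as factors if there is an isomorphism $\Psi:Y\to Z$ of the factor actions with $\Psi\circ\Phi=\Omega$). The ergodic decomposition of $\mathsf{A}$ is the realization of $\mathcal{E}_{\mathsf{A}}$; its underlying space $(E_{\mathsf{A}},\eta_{\mathsf{A}})$ is the space of ergodic components of $\mathsf{A}$. For commuting $(\mathsf{A},\mathsf{B})$, $\mathcal{E}_{\mathsf{A}}$ is $\mathsf{B}$-stable, and $\mathsf{E}_{\mathsf{B}\curvearrowright\mathsf{A}}$ denotes the resulting factor action of $H$ on $(E_{\mathsf{A}},\eta_{\mathsf{A}})$; symmetrically $\mathsf{E}_{\mathsf{A}\curvearrowright\mathsf{B}}$ is the factor action of $G$ on $(E_{\mathsf{B}},\eta_{\mathsf{B}})$. The synergodic decomposition of $(\mathsf{A},\mathsf{B})$ is the factor of $(\mathsf{A},\mathsf{B})$ realizing the $\sigma$-algebra $\sigma(\mathcal{E}_{\mathsf{A}},\mathcal{E}_{\mathsf{B}})$ generated by $\mathcal{E}_{\mathsf{A}}$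 and $\mathcal{E}_{\mathsf{B}}$. For $\mathsf{C}$ a p.m.p. action of $G$ on $(Y,\nu)$ and $\mathsf{D}$ a p.m.p. action of $H$ on $(Z,\omega)$, the local product $\mathsf{C}\boxdot\mathsf{D}$ is the action of $G\times H$ on $(Y\times Z,\nu\times\omega)$ given by $(g,h)\cdot(y,z)=(\mathsf{C}^gy,\mathsf{D}^hz)$. *)

theory Defs
  imports "HOL-Probability.Probability"
begin

definition standard_prob_space :: "('a::polish_space) measure \<Rightarrow> bool" where
  "standard_prob_space M \<longleftrightarrow> prob_space M \<and> space M = UNIV \<and> sets M = sets borel"

definition mp_map :: "'a measure \<Rightarrow> 'b measure \<Rightarrow> ('a \<Rightarrow> 'b) \<Rightarrow> bool" where
  "mp_map M N f \<longleftrightarrow> f \<in> measurable M N \<and> distr M N f = N"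

text \<open>A p.m.p. action of a (countable discrete) group: each group element acts by a
  measure-preserving transformation, and the action law holds almost everywhere
  (elements of Aut(X,mu) are identified when equal a.e.).  Invertibility follows
  from the action law.\<close>
definition pmp_action :: "'x measure \<Rightarrow> ('g::group_add \<Rightarrow> 'x \<Rightarrow> 'x) \<Rightarrow> bool" where
  "pmp_action M A \<longleftrightarrow>
     (\<forall>g. mp_map M M (A g)) \<and>
     (AE x in M. A 0 x = x) \<and>
     (\<forall>g h. AE x in M. A (g + h) x = A g (A h x))"

text \<open>Commuting pair of actions = p.m.p. action of G x H.\<close>
definition commuting :: "'x measure \<Rightarrow> ('g \<Rightarrow> 'x \<Rightarrow> 'x) \<Rightarrow> ('h \<Rightarrow> 'x \<Rightarrow> 'x) \<Rightarrow> bool" where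
  "commuting M A B \<longleftrightarrow> (\<forall>g h. AE x in M. A g (B h x) = B h (A g x))"

definition pmp_pair_action :: "'x measure \<Rightarrow> ('g::group_add \<Rightarrow> 'x \<Rightarrow> 'x) \<Rightarrow> ('h::group_add \<Rightarrow> 'x \<Rightarrow> 'x) \<Rightarrow> bool" where
  "pmp_pair_action M A B \<longleftrightarrow> pmp_action M A \<and> pmp_action M B \<and> commuting M A B"

definition pair_act :: "('g \<Rightarrow> 'x \<Rightarrow> 'x) \<Rightarrow> ('h \<Rightarrow> 'x \<Rightarrow> 'x) \<Rightarrow> ('g \<times> 'h) \<Rightarrow> 'x \<Rightarrow> 'x" where
  "pair_act A B = (\<lambda>(g, h) x. A g (B h x))"

definition sdiff :: "'x set \<Rightarrow> 'x set \<Rightarrow> 'x set" where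
  "sdiff D E = (D - E) \<union> (E - D)"

definition invariant_set :: "'x measure \<Rightarrow> ('i \<Rightarrow> 'x \<Rightarrow> 'x) \<Rightarrow> 'x set \<Rightarrow> bool" where
  "invariant_set M A D \<longleftrightarrow> D \<in> sets M \<and>
     (\<forall>g. measure M (sdiff ((A g -` D) \<inter> space M) D) = 0)"

definition inv_sets :: "'x measure \<Rightarrow> ('i \<Rightarrow> 'x \<Rightarrow> 'x) \<Rightarrow> 'x set set" where
  "inv_sets M A = {D. invariant_set M A D}"

definition ergodic :: "'x measure \<Rightarrow> ('i \<Rightarrow> 'x \<Rightarrow> 'x) \<Rightarrow> bool" where
  "ergodic M A \<longleftrightarrow> (\<forall>D \<in> inv_sets M A. measure M D = 0 \<or> measure M D = 1)"

definition factor_map :: "'x measure \<Rightarrow> ('i \<Rightarrow> 'x \<Rightarrow> 'x) \<Rightarrow> 'y measure \<Rightarrow> ('i \<Rightarrow> 'y \<Rightarrow> 'y) \<Rightarrow> ('x \<Rightarrow> 'y) \<Rightarrow> bool" where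
  "factor_map M A N C \<Phi> \<longleftrightarrow> mp_map M N \<Phi> \<and> (\<forall>g. AE x in M. \<Phi> (A g x) = C g (\<Phi> x))"

definition eq_mod_null :: "'x measure \<Rightarrow> 'x set set \<Rightarrow> 'x set set \<Rightarrow> bool" where
  "eq_mod_null M S T \<longleftrightarrow>
     (\<forall>D\<in>S. \<exists>D'\<in>T. measure M (sdiff D D') = 0) \<and> (\<forall>D\<in>T. \<exists>D'\<in>S. measure M (sdiff D D') = 0)"

definition pullback_sets :: "'x measure \<Rightarrow> 'y measure \<Rightarrow> ('x \<Rightarrow> 'y) \<Rightarrow> 'x set set" where
  "pullback_sets M N \<Phi> = {\<Phi> -` D \<inter> space M | D. D \<in> sets N}"

definition realizes :: "'x measure \<Rightarrow> 'y measure \<Rightarrow> ('x \<Rightarrow> 'y) \<Rightarrow> 'x set set \<Rightarrow> bool" where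
  "realizes M N \<Phi> S \<longleftrightarrow> eq_mod_null M (pullback_sets M N \<Phi>) S"

definition action_iso :: "'x measure \<Rightarrow> ('i \<Rightarrow> 'x \<Rightarrow> 'x) \<Rightarrow> 'y measure \<Rightarrow> ('i \<Rightarrow> 'y \<Rightarrow> 'y) \<Rightarrow> ('x \<Rightarrow> 'y) \<Rightarrow> bool" where
  "action_iso M A N C \<Psi> \<longleftrightarrow> factor_map M A N C \<Psi> \<and>
     (\<exists>\<Psi>'. mp_map N M \<Psi>' \<and> (AE x in M. \<Psi>' (\<Psi> x) = x) \<and> (AE y in N. \<Psi> (\<Psi>' y) = y))"

definition local_prod_G :: "('g \<Rightarrow> 'y \<Rightarrow> 'y) \<Rightarrow> 'g \<Rightarrow> ('y \<times> 'z) \<Rightarrow> ('y \<times> 'z)" where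
  "local_prod_G C = (\<lambda>g (y, z). (C g y, z))"

definition local_prod_H :: "('h \<Rightarrow> 'z \<Rightarrow> 'z) \<Rightarrow> 'h \<Rightarrow> ('y \<times> 'z) \<Rightarrow> ('y \<times> 'z)" where
  "local_prod_H D = (\<lambda>h (y, z). (y, D h z))"

end

theory Submission
  imports Defs
begin



lemma DD:
  fixes f :: "'a \<Rightarrow> 'z::{complete_space, second_countable_topology}" and \<Phi> :: "'a \<Rightarrow> 'b"
  assumes \<Phi>: "\<Phi> \<in> measurable M N" and f: "f \<in> borel_measurable M"
    and H: "\<And>U. open U \<Longrightarrow> \<exists>V\<in>sets N. AE x in M. (f x \<in> U) = (\<Phi> x \<in> V)"
  shows "\<exists>g \<in> borel_measurable N. AE x in M. g (\<Phi> x) = f x"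
proof -
  obtain D :: "'z set" where D: "countable D" and dense: "\<And>X. open X \<Longrightarrow> X \<noteq> {} \<Longrightarrow> \<exists>d\<in>D. d \<in> X"
    using countable_dense_setE by blast
  have Dne: "D \<noteq> {}" using dense[of UNIV] by auto
  define z where "z = from_nat_into D"
  have rz: "range z = D" unfolding z_def using Dne D by simp
  have "\<forall>p::nat\<times>nat. \<exists>V. V\<in>sets N \<and> (AE x in M. (f x \<in> ball (z (fst p)) (1/Suc (snd p))) = (\<Phi> x \<in> V))"
    using H by (metis open_ball)
  then obtain VV where VV: "\<And>p. VV p \<in> sets N"
      "\<And>p. AE x in M. (f x \<in> ball (z (fst p)) (1/Suc (snd p))) = (\<Phi> x \<in> VV p)"
    by metis
  define V where "V k m = VV (k, m)" for k m
  have V: "\<And>k m. V k m \<in> sets N" "\<And>k m. AE x in M. (f x \<in> ball (z k) (1/Suc m)) = (\<Phi> x \<in> V k m)"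
    unfolding V_def using VV by (metis fst_conv snd_conv)+
  define s where "s m y = z (LEAST k. y \<in> V k m)" for m y
  have sm[measurable]: "s m \<in> borel_measurable N" for m
  proof -
    have "(\<lambda>y. LEAST k. y \<in> V k m) \<in> measurable N (count_space UNIV)"
      by (rule measurable_Least) (use V(1) in auto)
    moreover have "z \<in> measurable (count_space UNIV) borel" by simp
    ultimately show ?thesis unfolding s_def by (rule measurable_compose)
  qed
  define g where "g y = lim (\<lambda>i. if Cauchy (\<lambda>i. s i y) then s i y else z 0)" for y
  have gm: "g \<in> borel_measurable N"
  proof (rule borel_measurable_LIMSEQ_metric)
    fix y
    have "convergent (\<lambda>i. if Cauchy (\<lambda>i. s i y) then s i y else z 0)"
      by (cases "Cauchy (\<lambda>i. s i y)")
         (auto simp add: convergent_eq_Cauchy[symmetric] convergent_def)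
    then show "(\<lambda>i. if Cauchy (\<lambda>i. s i y) then s i y else z 0) \<longlonglongrightarrow> g y"
      unfolding g_def by (rule convergent_LIMSEQ_iff[THEN iffD1])
  qed measurable
  have "AE x in M. \<forall>k m. (f x \<in> ball (z k) (1/Suc m)) = (\<Phi> x \<in> V k m)"
    using V(2) by (simp add: AE_all_countable)
  then have "AE x in M. g (\<Phi> x) = f x"
  proof eventually_elim
    case (elim x)
    have close: "dist (s m (\<Phi> x)) (f x) < 1/Suc m" for m
    proof -
      obtain d where "d \<in> D" "d \<in> ball (f x) (1/Suc m)"
        using dense[of "ball (f x) (1/Suc m)"] by auto
      then obtain k where "f x \<in> ball (z k) (1/Suc m)" using rz
        by (metis dist_commute imageE mem_ball)
      then have "\<Phi> x \<in> V k m" using elim by blast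
      then have "\<Phi> x \<in> V (LEAST k. \<Phi> x \<in> V k m) m" by (rule LeastI)
      then have "f x \<in> ball (s m (\<Phi> x)) (1/Suc m)" using elim unfolding s_def by blast
      then show ?thesis by (simp add: dist_commute)
    qed
    have lim: "(\<lambda>i. s i (\<Phi> x)) \<longlonglongrightarrow> f x"
    proof (rule metric_LIMSEQ_I)
      fix r :: real assume "r > 0"
      then obtain n where n: "inverse (real (Suc n)) < r" using reals_Archimedean by blast
      show "\<exists>no. \<forall>m\<ge>no. dist (s m (\<Phi> x)) (f x) < r"
      proof (intro exI allI impI)
        fix m assume "m \<ge> n"
        then have "1/real (Suc m) \<le> inverse (real (Suc n))"
          by (simp add: divide_inverse le_imp_inverse_le)
        then show "dist (s m (\<Phi> x)) (f x) < r" using close[of m] n by linarith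
      qed
    qed
    then have "Cauchy (\<lambda>i. s i (\<Phi> x))" using LIMSEQ_imp_Cauchy by blast
    then show ?case unfolding g_def using lim by (simp add: limI)
  qed
  then show ?thesis using gm by blast
qed




lemma sdiff_eq: "S \<subseteq> space M \<Longrightarrow> T \<subseteq> space M \<Longrightarrow> sdiff S T = {x\<in>space M. \<not>((x\<in>S) = (x\<in>T))}"
  unfolding sdiff_def by auto

lemma null_sdiff_iff:
  assumes "finite_measure M" "S\<in>sets M" "T\<in>sets M"
  shows "measure M (sdiff S T) = 0 \<longleftrightarrow> (AE x in M. (x\<in>S) = (x\<in>T))"
proof -
  have s: "sdiff S T \<in> sets M" using assms unfolding sdiff_def by auto
  have "(AE x in M. (x\<in>S) = (x\<in>T)) \<longleftrightarrow> emeasure M (sdiff S T) = 0"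
    by (rule AE_iff_measurable[OF s]) (use assms sets.sets_into_space in \<open>auto simp: sdiff_def\<close>)
  also have "\<dots> \<longleftrightarrow> measure M (sdiff S T) = 0"
    using finite_measure.emeasure_eq_measure[OF assms(1)] by simp
  finally show ?thesis by simp
qed

lemma mp_AE: "mp_map M M T \<Longrightarrow> AE x in M. P x \<Longrightarrow> AE x in M. P (T x)"
  unfolding mp_map_def by (metis AE_distrD)

lemma mp_AE_gen: "mp_map M N T \<Longrightarrow> AE x in N. P x \<Longrightarrow> AE x in M. P (T x)"
  unfolding mp_map_def by (metis AE_distrD)

locale inv_setup = prob_space M for M :: "'x measure" +
  fixes A :: "'g::group_add \<Rightarrow> 'x \<Rightarrow> 'x"
  assumes actA: "pmp_action M A"
begin

lemma Amp: "mp_map M M (A g)" using actA unfolding pmp_action_def by auto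
lemma Am[measurable]: "A g \<in> measurable M M" using Amp unfolding mp_map_def by auto

lemma inv_iff: "D \<in> inv_sets M A \<longleftrightarrow> D \<in> sets M \<and> (\<forall>g. AE x in M. (A g x \<in> D) = (x\<in>D))"
proof -
  have "(measure M (sdiff (A g -` D \<inter> space M) D) = 0) \<longleftrightarrow> (AE x in M. (A g x \<in> D) = (x\<in>D))"
    if D: "D \<in> sets M" for g
  proof -
    have "A g -` D \<inter> space M \<in> sets M" using D by (rule measurable_sets[OF Am])
    then have "measure M (sdiff (A g -` D \<inter> space M) D) = 0 \<longleftrightarrow> (AE x in M. (x\<in>A g -` D \<inter> space M) = (x\<in>D))"
      using null_sdiff_iff[OF _ _ D] finite_measure_axioms by blast
    also have "\<dots> \<longleftrightarrow> (AE x in M. (A g x \<in> D) = (x\<in>D))"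
      by (rule AE_cong) auto
    finally show ?thesis .
  qed
  then show ?thesis unfolding inv_sets_def invariant_set_def by auto
qed

lemma inv_sets_sets: "D \<in> inv_sets M A \<Longrightarrow> D \<in> sets M" using inv_iff by auto

lemma inv_AE_closed:
  assumes D: "D \<in> inv_sets M A" and E: "E \<in> sets M" and ae: "AE x in M. (x\<in>D) = (x\<in>E)"
  shows "E \<in> inv_sets M A"
proof -
  have "AE x in M. (A g x \<in> E) = (x\<in>E)" for g
  proof -
    have "AE x in M. (A g x\<in>D) = (A g x\<in>E)" by (rule mp_AE[OF Amp ae])
    moreover have "AE x in M. (A g x \<in> D) = (x\<in>D)" using D inv_iff by auto
    ultimately show ?thesis using ae by eventually_elim auto
  qed
  then show ?thesis using E inv_iff by auto
qed

lemma inv_compl: "D \<in> inv_sets M A \<Longrightarrow> space M - D \<in> inv_sets M A"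
proof -
  assume D: "D \<in> inv_sets M A"
  have "AE x in M. (A g x \<in> space M - D) = (x\<in>space M - D)" for g
  proof -
    have "AE x in M. (A g x \<in> D) = (x\<in>D)" using D inv_iff by auto
    then show ?thesis using AE_space
      by eventually_elim (use measurable_space[OF Am] in auto)
  qed
  moreover have "space M - D \<in> sets M" using D inv_sets_sets by blast
  ultimately show ?thesis unfolding inv_iff by blast
qed

lemma inv_UN: "(\<And>i::nat. D i \<in> inv_sets M A) \<Longrightarrow> (\<Union>i. D i) \<in> inv_sets M A"
proof -
  assume D: "\<And>i::nat. D i \<in> inv_sets M A"
  have "AE x in M. (A g x \<in> (\<Union>i. D i)) = (x\<in>(\<Union>i. D i))" for g
  proof -
    have "AE x in M. \<forall>i. (A g x \<in> D i) = (x\<in>D i)" unfolding AE_all_countable using D unfolding inv_iff by blast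
    then show ?thesis by eventually_elim auto
  qed
  moreover have "(\<Union>i. D i) \<in> sets M" using D inv_sets_sets by blast
  ultimately show ?thesis unfolding inv_iff by blast
qed

lemma inv_empty: "{} \<in> inv_sets M A" unfolding inv_iff by simp

lemma sigma_inv: "sigma_sets (space M) (inv_sets M A) = inv_sets M A"
proof
  show "sigma_sets (space M) (inv_sets M A) \<subseteq> inv_sets M A"
  proof
    fix S assume "S \<in> sigma_sets (space M) (inv_sets M A)"
    then show "S \<in> inv_sets M A"
      by induct (auto intro: inv_compl inv_UN inv_empty)
  qed
qed (rule sigma_sets_superset_generator)

end




lemma inv_iff_gen:
  assumes fm: "finite_measure M" and Am: "\<And>g. A g \<in> measurable M M"
  shows "D \<in> inv_sets M A \<longleftrightarrow> D \<in> sets M \<and> (\<forall>g. AE x in M. (A g x \<in> D) = (x\<in>D))"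
proof -
  have "(measure M (sdiff (A g -` D \<inter> space M) D) = 0) \<longleftrightarrow> (AE x in M. (A g x \<in> D) = (x\<in>D))"
    if D: "D \<in> sets M" for g
  proof -
    have "A g -` D \<inter> space M \<in> sets M" using D by (rule measurable_sets[OF Am])
    then have "measure M (sdiff (A g -` D \<inter> space M) D) = 0 \<longleftrightarrow> (AE x in M. (x\<in>A g -` D \<inter> space M) = (x\<in>D))"
      using null_sdiff_iff[OF fm _ D] by blast
    also have "\<dots> \<longleftrightarrow> (AE x in M. (A g x \<in> D) = (x\<in>D))"
      by (rule AE_cong) auto
    finally show ?thesis .
  qed
  then show ?thesis unfolding inv_sets_def invariant_set_def by auto
qed

locale pair_setup = prob_space M for M :: "'x measure" +
  fixes A :: "'g::group_add \<Rightarrow> 'x \<Rightarrow> 'x" and B :: "'h::group_add \<Rightarrow> 'x \<Rightarrow> 'x"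
  assumes act: "pmp_pair_action M A B"
begin

sublocale IA: inv_setup M A using act unfolding pmp_pair_action_def by unfold_locales auto
sublocale IB: inv_setup M B using act unfolding pmp_pair_action_def by unfold_locales auto

lemma comm: "AE x in M. A g (B h x) = B h (A g x)"
  using act unfolding pmp_pair_action_def commuting_def by auto

lemma comm_pre:
  assumes T: "T \<in> inv_sets M A"
  shows "B h -` T \<inter> space M \<in> inv_sets M A"
proof -
  have Tm: "T \<in> sets M" using T IA.inv_sets_sets by blast
  have m: "B h -` T \<inter> space M \<in> sets M" using Tm by (rule measurable_sets[OF IB.Am])
  have "AE x in M. (A g x \<in> B h -` T \<inter> space M) = (x \<in> B h -` T \<inter> space M)" for g
  proof -
    have "AE x in M. (A g x \<in> T) = (x \<in> T)" using T IA.inv_iff by blast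
    then have "AE x in M. (A g (B h x) \<in> T) = (B h x \<in> T)" by (rule mp_AE[OF IB.Amp])
    then show ?thesis using comm[of g h] AE_space
      by eventually_elim (use measurable_space[OF IA.Am] in auto)
  qed
  then show ?thesis using m IA.inv_iff by blast
qed

lemma pair_m: "pair_act A B gh \<in> measurable M M"
  unfolding pair_act_def by (cases gh) (simp add: measurable_compose[OF IB.Am IA.Am])

lemma indep:
  assumes erg: "ergodic M (pair_act A B)" and S1: "S1 \<in> inv_sets M B" and S2: "S2 \<in> inv_sets M A"
  shows "measure M (S1 \<inter> S2) = measure M S1 * measure M S2"
proof -
  define F where "F = sigma (space M) (inv_sets M A)"
  have invsub: "inv_sets M A \<subseteq> Pow (space M)" using IA.inv_sets_sets sets.sets_into_space by blast
  have setsF: "sets F = inv_sets M A" unfolding F_def using sets_measure_of[OF invsub] IA.sigma_inv by simp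
  have spaceF: "space F = space M" unfolding F_def by (simp add: space_measure_of_conv)
  have sub: "subalgebra M F" unfolding subalgebra_def using setsF spaceF IA.inv_sets_sets by auto
  interpret fms: finite_measure_subalgebra M F by unfold_locales (rule sub)
  have S1m[measurable]: "S1 \<in> sets M" using S1 IB.inv_sets_sets by blast
  have S2F: "S2 \<in> sets F" using S2 setsF by simp
  have S2m[measurable]: "S2 \<in> sets M" using S2 IA.inv_sets_sets by blast
  have int1: "integrable M (indicator S1 :: _ \<Rightarrow> real)" using S1m by (intro integrable_real_indicator) (simp_all add: emeasure_eq_measure)
  define \<phi> where "\<phi> = real_cond_exp M F (indicator S1)"
  have \<phi>F: "\<phi> \<in> borel_measurable F" unfolding \<phi>_def by (rule borel_measurable_cond_exp)
  have \<phi>M[measurable]: "\<phi> \<in> borel_measurable M" unfolding \<phi>_def by (rule borel_measurable_cond_exp2)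
  have int\<phi>: "integrable M \<phi>" unfolding \<phi>_def using int1 by (rule fms.real_cond_exp_int(1))
  have pre\<phi>: "\<phi> -` U \<inter> space M \<in> inv_sets M A" if "U \<in> sets borel" for U
    using measurable_sets[OF \<phi>F that] setsF spaceF by simp
  have distrB: "distr M M (B h) = M" for h using IB.Amp unfolding mp_map_def by blast
  have key: "AE x in M. \<phi> (B h x) = \<phi> x" for h
  proof -
    have Bm[measurable]: "B h \<in> measurable M M" by (rule IB.Am)
    have "AE x in M. real_cond_exp M F (indicator S1) x = \<phi> (B h x)"
    proof (rule fms.real_cond_exp_charact)
      show "integrable M (indicator S1 :: _ \<Rightarrow> real)" by (rule int1)
      show "integrable M (\<lambda>x. \<phi> (B h x))"
        using integrable_distr_eq[of "B h" M M \<phi>] int\<phi> distrB by simp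
      show "(\<lambda>x. \<phi> (B h x)) \<in> borel_measurable F"
      proof (rule measurableI)
        fix U :: "real set" assume U: "U \<in> sets borel"
        have "(\<lambda>x. \<phi> (B h x)) -` U \<inter> space F = B h -` (\<phi> -` U \<inter> space M) \<inter> space M"
          using spaceF measurable_space[OF Bm] by auto
        also have "\<dots> \<in> sets F" using comm_pre[OF pre\<phi>[OF U]] setsF by simp
        finally show "(\<lambda>x. \<phi> (B h x)) -` U \<inter> space F \<in> sets F" .
      qed simp
      fix Q assume Q: "Q \<in> sets F"
      then have QA: "Q \<in> inv_sets M A" using setsF by simp
      have Qm[measurable]: "Q \<in> sets M" using QA IA.inv_sets_sets by blast
      define Q' where "Q' = B (-h) -` Q \<inter> space M"
      have Q'A: "Q' \<in> inv_sets M A" unfolding Q'_def by (rule comm_pre[OF QA])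
      have Q'F: "Q' \<in> sets F" using Q'A setsF by simp
      have Q'm[measurable]: "Q' \<in> sets M" using Q'A IA.inv_sets_sets by blast
      have ae1: "AE x in M. (x \<in> Q) = (B h x \<in> Q')"
      proof -
        have "AE x in M. B (-h + h) x = B (-h) (B h x)" using IB.actA unfolding pmp_action_def by blast
        moreover have "AE x in M. B 0 x = x" using IB.actA unfolding pmp_action_def by blast
        ultimately show ?thesis using AE_space
          by eventually_elim (use measurable_space[OF Bm] in \<open>auto simp: Q'_def\<close>)
      qed
      have ae2: "AE x in M. (B h x \<in> S1) = (x \<in> S1)" using S1 IB.inv_iff by blast
      have "(\<integral>x\<in>Q. \<phi> (B h x) \<partial>M) = (\<integral>x. indicator Q x * \<phi> (B h x) \<partial>M)"
        unfolding set_lebesgue_integral_def by simp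
      also have "\<dots> = (\<integral>x. indicator Q' (B h x) * \<phi> (B h x) \<partial>M)"
        by (rule integral_cong_AE) (use ae1 in \<open>auto elim!: eventually_mono simp: indicator_def\<close>)
      also have "\<dots> = (\<integral>y. indicator Q' y * \<phi> y \<partial>distr M M (B h))"
        by (rule integral_distr[symmetric]) auto
      also have "\<dots> = (\<integral>y. indicator Q' y * \<phi> y \<partial>M)" using distrB by simp
      also have "\<dots> = (\<integral>y. indicator Q' y * indicator S1 y \<partial>M)"
        unfolding \<phi>_def
        by (rule fms.real_cond_exp_intg(2)) (use integrable_mult_indicator[OF Q'm int1] in \<open>auto intro: measurable_from_subalg[OF sub] simp: Q'F borel_measurable_indicator\<close>)
      also have "\<dots> = (\<integral>y. indicator Q' y * indicator S1 y \<partial>distr M M (B h))" using distrB by simp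
      also have "\<dots> = (\<integral>x. indicator Q' (B h x) * indicator S1 (B h x) \<partial>M)"
        by (rule integral_distr) auto
      also have "\<dots> = (\<integral>x. indicator Q x * indicator S1 x \<partial>M)"
        by (rule integral_cong_AE) (use ae1 ae2 in \<open>auto elim!: eventually_elim2 simp: indicator_def\<close>)
      also have "\<dots> = (\<integral>x\<in>Q. indicator S1 x \<partial>M)"
        unfolding set_lebesgue_integral_def by simp
      finally show "(\<integral>x\<in>Q. indicator S1 x \<partial>M) = (\<integral>x\<in>Q. \<phi> (B h x) \<partial>M)" by simp
    qed
    then show ?thesis unfolding \<phi>_def by (auto elim!: eventually_mono)
  qed
  have zero_one: "measure M (\<phi> -` U \<inter> space M) = 0 \<or> measure M (\<phi> -` U \<inter> space M) = 1"
    if U: "U \<in> sets borel" for U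
  proof -
    let ?T = "\<phi> -` U \<inter> space M"
    have TA: "?T \<in> inv_sets M A" by (rule pre\<phi>[OF U])
    have Tm: "?T \<in> sets M" using TA IA.inv_sets_sets by blast
    have "?T \<in> inv_sets M (pair_act A B)"
      unfolding inv_iff_gen[OF finite_measure_axioms pair_m]
    proof (intro conjI allI Tm)
      fix gh :: "'g \<times> 'h"
      obtain g h where gh: "gh = (g, h)" by (cases gh)
      have "AE x in M. (A g x \<in> ?T) = (x \<in> ?T)" using TA IA.inv_iff by blast
      then have "AE x in M. (A g (B h x) \<in> ?T) = (B h x \<in> ?T)" by (rule mp_AE[OF IB.Amp])
      then show "AE x in M. (pair_act A B gh x \<in> ?T) = (x \<in> ?T)"
        using key[of h] AE_space
        by eventually_elim (use measurable_space[OF IB.Am] in \<open>auto simp: gh pair_act_def\<close>)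
    qed
    then show ?thesis using erg unfolding ergodic_def by blast
  qed
  define c where "c = measure M S1"
  have intc: "(\<integral>x. \<phi> x \<partial>M) = c"
    unfolding \<phi>_def c_def using fms.real_cond_exp_int(2)[OF int1] by simp
  have le: "AE x in M. \<phi> x \<le> c"
  proof -
    have "AE x in M. \<phi> x \<le> q" if q: "q \<in> \<rat>" "q > c" for q
    proof -
      let ?T = "\<phi> -` {q<..} \<inter> space M"
      have Tm: "?T \<in> sets M" by measurable
      have "measure M ?T \<noteq> 1"
      proof
        assume "measure M ?T = 1"
        then have "AE x in M. x \<in> ?T" using prob_eq_1[OF Tm] by simp
        then have "AE x in M. q \<le> \<phi> x" by (auto elim!: eventually_mono)
        then have "(\<integral>x. q \<partial>M) \<le> (\<integral>x. \<phi> x \<partial>M)"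
          by (intro integral_mono_AE int\<phi>) auto
        then show False using q intc prob_space by simp
      qed
      then have "measure M ?T = 0" using zero_one[of "{q<..}"] by auto
      then have "?T \<in> null_sets M" using Tm by (simp add: emeasure_eq_measure null_sets_def)
      then have "AE x in M. x \<notin> ?T" by (rule AE_not_in)
      then show ?thesis by (auto elim!: eventually_mono)
    qed
    then have "AE x in M. \<forall>q\<in>\<rat>. q > c \<longrightarrow> \<phi> x \<le> q"
      by (subst AE_ball_countable) (auto intro: countable_rat)
    then show ?thesis
    proof eventually_elim
      case (elim x)
      show ?case
      proof (rule ccontr)
        assume "\<not> \<phi> x \<le> c"
        then obtain r where "r \<in> \<rat>" "c < r" "r < \<phi> x" using Rats_dense_in_real[of c "\<phi> x"] by auto
        then show False using elim by force
      qed
    qed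
  qed
  have const: "AE x in M. \<phi> x = c"
  proof -
    have "(\<integral>x. c - \<phi> x \<partial>M) = 0" using intc int\<phi> prob_space by simp
    moreover have "integrable M (\<lambda>x. c - \<phi> x)" using int\<phi> by simp
    ultimately have "AE x in M. c - \<phi> x = 0"
      using integral_nonneg_eq_0_iff_AE[of M "\<lambda>x. c - \<phi> x"] le by (auto elim!: eventually_mono)
    then show ?thesis by (auto elim!: eventually_mono)
  qed
  have "measure M (S1 \<inter> S2) = (\<integral>x\<in>S2. indicator S1 x \<partial>M)"
    unfolding set_lebesgue_integral_def
    by (simp add: indicator_inter_arith[symmetric] Int_commute Int_absorb2 sets.sets_into_space)
  also have "\<dots> = (\<integral>x\<in>S2. \<phi> x \<partial>M)"
    unfolding \<phi>_def by (rule fms.real_cond_exp_intA[OF int1 S2F])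
  also have "\<dots> = (\<integral>x\<in>S2. c \<partial>M)"
    unfolding set_lebesgue_integral_def
    by (rule integral_cong_AE) (use const in \<open>auto elim!: eventually_mono\<close>)
  also have "\<dots> = c * measure M S2"
    unfolding set_lebesgue_integral_def using sets.sets_into_space[OF S2m] by (simp add: Int_absorb2 mult.commute)
  finally show ?thesis unfolding c_def .
qed

end



lemma realize_a:
  assumes fm: "finite_measure M" and \<Phi>: "\<Phi> \<in> measurable M N" and S: "S \<subseteq> sets M"
    and R: "realizes M N \<Phi> S" and V: "V \<in> sets N"
  shows "\<exists>D\<in>S. AE x in M. (\<Phi> x \<in> V) = (x \<in> D)"
proof -
  have P: "\<Phi> -` V \<inter> space M \<in> pullback_sets M N \<Phi>" unfolding pullback_sets_def using V by blast
  then obtain D where D: "D \<in> S" "measure M (sdiff (\<Phi> -` V \<inter> space M) D) = 0"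
    using R unfolding realizes_def eq_mod_null_def by blast
  have m: "\<Phi> -` V \<inter> space M \<in> sets M" using measurable_sets[OF \<Phi> V] .
  have "AE x in M. (x \<in> \<Phi> -` V \<inter> space M) = (x \<in> D)"
    using null_sdiff_iff[OF fm m] D S by blast
  then have "AE x in M. (\<Phi> x \<in> V) = (x \<in> D)" by (rule AE_mp) (rule AE_I2, auto)
  then show ?thesis using D by blast
qed

lemma realize_b:
  assumes fm: "finite_measure M" and \<Phi>: "\<Phi> \<in> measurable M N" and S: "S \<subseteq> sets M"
    and R: "realizes M N \<Phi> S" and D: "D \<in> S"
  shows "\<exists>V\<in>sets N. AE x in M. (x \<in> D) = (\<Phi> x \<in> V)"
proof -
  obtain D' where D': "D' \<in> pullback_sets M N \<Phi>" "measure M (sdiff D D') = 0"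
    using R D unfolding realizes_def eq_mod_null_def by blast
  then obtain V where V: "V \<in> sets N" "D' = \<Phi> -` V \<inter> space M" unfolding pullback_sets_def by blast
  have m: "\<Phi> -` V \<inter> space M \<in> sets M" using measurable_sets[OF \<Phi> V(1)] .
  have "AE x in M. (x \<in> D) = (x \<in> \<Phi> -` V \<inter> space M)"
    using null_sdiff_iff[OF fm _ m] D' V D S by blast
  then have "AE x in M. (x \<in> D) = (\<Phi> x \<in> V)" by (rule AE_mp) (rule AE_I2, auto)
  then show ?thesis using V by blast
qed

lemma (in inv_setup) inv_const:
  fixes \<pi> :: "'x \<Rightarrow> 'e::{second_countable_topology, t2_space}"
  assumes \<pi>: "\<pi> \<in> measurable M E" and sE: "sets E = sets borel"
    and R: "realizes M E \<pi> (inv_sets M A)"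
  shows "AE x in M. \<pi> (A g x) = \<pi> x"
proof -
  obtain Bs :: "'e set set" where Bs: "countable Bs" "topological_basis Bs"
    using ex_countable_basis by blast
  have "AE x in M. (\<pi> (A g x) \<in> U) = (\<pi> x \<in> U)" if U: "U \<in> Bs" for U
  proof -
    have "open U" using Bs(2) U topological_basis_open by blast
    then have "U \<in> sets E" using sE by simp
    then obtain D where D: "D \<in> inv_sets M A" "AE x in M. (\<pi> x \<in> U) = (x \<in> D)"
      using realize_a[OF finite_measure_axioms \<pi> _ R] inv_sets_sets by blast
    have "AE x in M. (A g x \<in> D) = (x \<in> D)" using D(1) inv_iff by blast
    moreover have "AE x in M. (\<pi> (A g x) \<in> U) = (A g x \<in> D)" by (rule mp_AE[OF Amp D(2)])
    ultimately show ?thesis using D(2) by eventually_elim auto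
  qed
  then have "AE x in M. \<forall>U\<in>Bs. (\<pi> (A g x) \<in> U) = (\<pi> x \<in> U)"
    using Bs(1) by (subst AE_ball_countable) auto
  then show ?thesis
  proof eventually_elim
    case (elim x)
    show ?case
    proof (rule ccontr)
      assume ne: "\<pi> (A g x) \<noteq> \<pi> x"
      obtain U where "open U" "\<pi> (A g x) \<in> U" "\<pi> x \<notin> U" using t1_space[OF ne] by blast
      then obtain V where "V \<in> Bs" "\<pi> (A g x) \<in> V" "V \<subseteq> U" using topological_basisE[OF Bs(2)] by metis
      then show False using elim \<open>\<pi> x \<notin> U\<close> by blast
    qed
  qed
qed




lemma AE_transfer:
  assumes "f \<in> measurable M N" "distr M N f = N" "AE x in M. P (f x)" "{x\<in>space N. P x} \<in> sets N"
  shows "AE x in N. P x"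
proof -
  have "AE x in distr M N f. P x" using AE_distr_iff[OF assms(1,4)] assms(3) by simp
  then show ?thesis using assms(2) by (simp only:)
qed

theorem mainTheorem1:
  fixes M :: "('x::polish_space) measure"
    and A :: "'g::{group_add, countable} \<Rightarrow> 'x \<Rightarrow> 'x"
    and B :: "'h::{group_add, countable} \<Rightarrow> 'x \<Rightarrow> 'x"
    and \<eta>A :: "('e::polish_space) measure" and \<pi>A :: "'x \<Rightarrow> 'e" and BA :: "'h \<Rightarrow> 'e \<Rightarrow> 'e"
    and \<eta>B :: "('f::polish_space) measure" and \<pi>B :: "'x \<Rightarrow> 'f" and AB :: "'g \<Rightarrow> 'f \<Rightarrow> 'f"
    and N :: "('y::polish_space) measure" and \<Phi> :: "'x \<Rightarrow> 'y"
    and C :: "'g \<Rightarrow> 'y \<Rightarrow> 'y" and D :: "'h \<Rightarrow> 'y \<Rightarrow> 'y"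
  assumes X: "standard_prob_space M"
    and act: "pmp_pair_action M A B"
    and erg: "ergodic M (pair_act A B)"
    \<comment> \<open>(\<pi>A, BA): ergodic decomposition of A, with the induced action E_{B~>A} of H\<close>
    and EA: "standard_prob_space \<eta>A" "pmp_action \<eta>A BA"
        "factor_map M B \<eta>A BA \<pi>A" "realizes M \<eta>A \<pi>A (inv_sets M A)"
    \<comment> \<open>(\<pi>B, AB): ergodic decomposition of B, with the induced action E_{A~>B} of G\<close>
    and EB: "standard_prob_space \<eta>B" "pmp_action \<eta>B AB"
        "factor_map M A \<eta>B AB \<pi>B" "realizes M \<eta>B \<pi>B (inv_sets M B)"
    \<comment> \<open>(\<Phi>, (C,D)): synergodic decomposition of (A,B)\<close>
    and SY: "standard_prob_space N" "pmp_pair_action N C D"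
        "factor_map M A N C \<Phi>" "factor_map M B N D \<Phi>"
        "realizes M N \<Phi> (sigma_sets (space M) (inv_sets M A \<union> inv_sets M B))"
  shows "\<exists>\<Psi> :: 'y \<Rightarrow> 'f \<times> 'e.
           action_iso N C (\<eta>B \<Otimes>\<^sub>M \<eta>A) (local_prod_G AB) \<Psi> \<and>
           action_iso N D (\<eta>B \<Otimes>\<^sub>M \<eta>A) (local_prod_H BA) \<Psi> \<and>
           (AE x in M. \<Psi> (\<Phi> x) = (\<pi>B x, \<pi>A x))"
proof -
  have MP: "prob_space M" and sM: "sets M = sets borel" using X unfolding standard_prob_space_def by auto
  have sA: "sets \<eta>A = sets borel" and PA: "prob_space \<eta>A" using EA(1) unfolding standard_prob_space_def by auto
  have sB: "sets \<eta>B = sets borel" and PB: "prob_space \<eta>B" using EB(1) unfolding standard_prob_space_def by auto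
  have sN: "sets N = sets borel" and PN: "prob_space N" using SY(1) unfolding standard_prob_space_def by auto
  interpret PS: pair_setup M A B unfolding pair_setup_def pair_setup_axioms_def using MP act by blast
  have fm: "finite_measure M" by (rule PS.finite_measure_axioms)
  have \<pi>Am: "\<pi>A \<in> measurable M \<eta>A" and dA: "distr M \<eta>A \<pi>A = \<eta>A"
    using EA(3) unfolding factor_map_def mp_map_def by auto
  have \<pi>Bm: "\<pi>B \<in> measurable M \<eta>B" and dB: "distr M \<eta>B \<pi>B = \<eta>B"
    using EB(3) unfolding factor_map_def mp_map_def by auto
  have \<Phi>m: "\<Phi> \<in> measurable M N" and dN: "distr M N \<Phi> = N"
    using SY(3) unfolding factor_map_def mp_map_def by auto
  define P where "P = \<eta>B \<Otimes>\<^sub>M \<eta>A"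
  have sP: "sets P = sets borel"
  proof -
    have "sets P = sets (borel \<Otimes>\<^sub>M borel :: ('f \<times> 'e) measure)"
      unfolding P_def by (rule sets_pair_measure_cong[OF sB sA])
    then show ?thesis by (metis borel_prod)
  qed
  have eqP: "measurable Q P = borel_measurable Q" for Q :: "'q measure" by (rule measurable_cong_sets[OF refl sP])
  have eqN: "measurable Q N = borel_measurable Q" for Q :: "'q measure" by (rule measurable_cong_sets[OF refl sN])
  define \<pi> where "\<pi> x = (\<pi>B x, \<pi>A x)" for x
  have \<pi>m: "\<pi> \<in> measurable M P" unfolding P_def \<pi>_def by (rule measurable_Pair[OF \<pi>Bm \<pi>Am])
  have invAs: "inv_sets M A \<subseteq> sets M" using PS.IA.inv_sets_sets by blast
  have invBs: "inv_sets M B \<subseteq> sets M" using PS.IB.inv_sets_sets by blast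
  let ?S = "sigma_sets (space M) (inv_sets M A \<union> inv_sets M B)"
  have SigS: "?S \<subseteq> sets M" using invAs invBs by (intro sets.sigma_sets_subset) auto
  have Sbasic: "D \<in> ?S" if "D \<in> inv_sets M A \<union> inv_sets M B" for D
    using that by (rule sigma_sets.Basic)
  have SInt: "D1 \<inter> D2 \<in> ?S" if "D1 \<in> ?S" "D2 \<in> ?S" for D1 D2
  proof -
    interpret SA: sigma_algebra "space M" ?S
      by (rule sigma_algebra_sigma_sets) (use invAs invBs sets.sets_into_space in blast)
    show ?thesis using that by blast
  qed
  have fwd: "\<exists>V\<in>sets N. AE x in M. (\<pi> x \<in> W) = (\<Phi> x \<in> V)" if W: "W \<in> sets P" for W
  proof -
    have "W \<in> sigma_sets (space \<eta>B \<times> space \<eta>A) {a \<times> b |a b. a \<in> sets \<eta>B \<and> b \<in> sets \<eta>A}"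
      using W unfolding P_def sets_pair_measure .
    then show ?thesis
    proof induct
      case (Basic W)
      then obtain a b where ab: "W = a \<times> b" "a \<in> sets \<eta>B" "b \<in> sets \<eta>A" by blast
      obtain D1 where D1: "D1 \<in> inv_sets M B" "AE x in M. (\<pi>B x \<in> a) = (x \<in> D1)"
        using realize_a[OF fm \<pi>Bm invBs EB(4) ab(2)] by blast
      obtain D2 where D2: "D2 \<in> inv_sets M A" "AE x in M. (\<pi>A x \<in> b) = (x \<in> D2)"
        using realize_a[OF fm \<pi>Am invAs EA(4) ab(3)] by blast
      have "D1 \<inter> D2 \<in> ?S" using D1(1) D2(1) by (intro SInt Sbasic) auto
      then obtain V where V: "V \<in> sets N" "AE x in M. (x \<in> D1 \<inter> D2) = (\<Phi> x \<in> V)"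
        using realize_b[OF fm \<Phi>m SigS SY(5)] by blast
      have "AE x in M. (\<pi> x \<in> W) = (\<Phi> x \<in> V)" using D1(2) D2(2) V(2)
        by eventually_elim (auto simp: ab \<pi>_def)
      then show ?case using V(1) by blast
    next
      case Empty
      then show ?case by (intro bexI[of _ "{}"]) auto
    next
      case (Compl a)
      then obtain V where V: "V \<in> sets N" "AE x in M. (\<pi> x \<in> a) = (\<Phi> x \<in> V)" by blast
      have "AE x in M. (\<pi> x \<in> space \<eta>B \<times> space \<eta>A - a) = (\<Phi> x \<in> space N - V)"
        using V(2) AE_space
        by eventually_elim (use measurable_space[OF \<Phi>m] measurable_space[OF \<pi>Am] measurable_space[OF \<pi>Bm] in \<open>auto simp: \<pi>_def\<close>)
      then show ?case using V(1) by blast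
    next
      case (Union a)
      then have "\<forall>i. \<exists>V. V \<in> sets N \<and> (AE x in M. (\<pi> x \<in> a i) = (\<Phi> x \<in> V))" by blast
      then obtain V where V: "\<And>i. V i \<in> sets N" "\<And>i. AE x in M. (\<pi> x \<in> a i) = (\<Phi> x \<in> V i)" by metis
      have "AE x in M. \<forall>i. (\<pi> x \<in> a i) = (\<Phi> x \<in> V i)" using V(2) by (simp add: AE_all_countable)
      then have "AE x in M. (\<pi> x \<in> (\<Union>i. a i)) = (\<Phi> x \<in> (\<Union>i. V i))" by eventually_elim auto
      then show ?case using V(1) by blast
    qed
  qed
  have bwd: "\<exists>W\<in>sets P. AE x in M. (x \<in> S) = (\<pi> x \<in> W)" if S: "S \<in> ?S" for S
    using S
  proof induct
    case (Basic S)
    then show ?case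
    proof
      assume SA: "S \<in> inv_sets M A"
      obtain V where V: "V \<in> sets \<eta>A" "AE x in M. (x \<in> S) = (\<pi>A x \<in> V)"
        using realize_b[OF fm \<pi>Am invAs EA(4) SA] by blast
      have "space \<eta>B \<times> V \<in> sets P" unfolding P_def using V(1) by (intro pair_measureI) auto
      moreover have "AE x in M. (x \<in> S) = (\<pi> x \<in> space \<eta>B \<times> V)"
        using V(2) AE_space by eventually_elim (use measurable_space[OF \<pi>Bm] in \<open>auto simp: \<pi>_def\<close>)
      ultimately show ?thesis by blast
    next
      assume SB: "S \<in> inv_sets M B"
      obtain V where V: "V \<in> sets \<eta>B" "AE x in M. (x \<in> S) = (\<pi>B x \<in> V)"
        using realize_b[OF fm \<pi>Bm invBs EB(4) SB] by blast
      have "V \<times> space \<eta>A \<in> sets P" unfolding P_def using V(1) by (intro pair_measureI) auto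
      moreover have "AE x in M. (x \<in> S) = (\<pi> x \<in> V \<times> space \<eta>A)"
        using V(2) AE_space by eventually_elim (use measurable_space[OF \<pi>Am] in \<open>auto simp: \<pi>_def\<close>)
      ultimately show ?thesis by blast
    qed
  next
    case Empty
    then show ?case by (intro bexI[of _ "{}"]) auto
  next
    case (Compl a)
    then obtain W where W: "W \<in> sets P" "AE x in M. (x \<in> a) = (\<pi> x \<in> W)" by blast
    have "AE x in M. (x \<in> space M - a) = (\<pi> x \<in> space P - W)"
      using W(2) AE_space
      by eventually_elim (use measurable_space[OF \<pi>m] in auto)
    then show ?case using W(1) by blast
  next
    case (Union a)
    then have "\<forall>i. \<exists>W. W \<in> sets P \<and> (AE x in M. (x \<in> a i) = (\<pi> x \<in> W))" by blast
    then obtain W where W: "\<And>i. W i \<in> sets P" "\<And>i. AE x in M. (x \<in> a i) = (\<pi> x \<in> W i)" by metis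
    have "AE x in M. \<forall>i. (x \<in> a i) = (\<pi> x \<in> W i)" using W(2) by (simp add: AE_all_countable)
    then have "AE x in M. (x \<in> (\<Union>i. a i)) = (\<pi> x \<in> (\<Union>i. W i))" by eventually_elim auto
    then show ?case using W(1) by blast
  qed
  have \<pi>b: "\<pi> \<in> borel_measurable M" using \<pi>m unfolding eqP .
  obtain \<Psi> where \<Psi>b: "\<Psi> \<in> borel_measurable N" and \<Psi>\<Phi>: "AE x in M. \<Psi> (\<Phi> x) = \<pi> x"
  proof -
    have "\<exists>g \<in> borel_measurable N. AE x in M. g (\<Phi> x) = \<pi> x"
    proof (rule DD[OF \<Phi>m \<pi>b])
      fix U :: "('f \<times> 'e) set" assume "open U"
      then have "U \<in> sets P" using sP by simp
      then obtain V where "V \<in> sets N" "AE x in M. (\<pi> x \<in> U) = (\<Phi> x \<in> V)" using fwd by blast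
      then show "\<exists>V\<in>sets N. AE x in M. (\<pi> x \<in> U) = (\<Phi> x \<in> V)" by blast
    qed
    then show ?thesis using that by blast
  qed
  have \<Phi>b: "\<Phi> \<in> borel_measurable M" using \<Phi>m unfolding eqN .
  obtain \<Psi>' where \<Psi>'b: "\<Psi>' \<in> borel_measurable P" and \<Psi>'\<pi>: "AE x in M. \<Psi>' (\<pi> x) = \<Phi> x"
  proof -
    have "\<exists>g \<in> borel_measurable P. AE x in M. g (\<pi> x) = \<Phi> x"
    proof (rule DD[OF \<pi>m \<Phi>b])
      fix U :: "'y set" assume "open U"
      then have "U \<in> sets N" using sN by simp
      then obtain S where S: "S \<in> ?S" "AE x in M. (\<Phi> x \<in> U) = (x \<in> S)"
        using realize_a[OF fm \<Phi>m SigS SY(5)] by blast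
      obtain W where W: "W \<in> sets P" "AE x in M. (x \<in> S) = (\<pi> x \<in> W)" using bwd[OF S(1)] by blast
      have "AE x in M. (\<Phi> x \<in> U) = (\<pi> x \<in> W)" using S(2) W(2) by eventually_elim auto
      then show "\<exists>W\<in>sets P. AE x in M. (\<Phi> x \<in> U) = (\<pi> x \<in> W)" using W(1) by blast
    qed
    then show ?thesis using that by blast
  qed
  have \<Psi>N: "\<Psi> \<in> measurable N P" unfolding eqP by (rule \<Psi>b)
  have \<Psi>'N: "\<Psi>' \<in> measurable P N" unfolding eqN by (rule \<Psi>'b)
  have d\<pi>: "distr M P \<pi> = P"
    unfolding P_def
  proof (rule pair_measure_eqI[symmetric])
    show "sigma_finite_measure \<eta>B" using PB by (simp add: prob_space_imp_sigma_finite)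
    show "sigma_finite_measure \<eta>A" using PA by (simp add: prob_space_imp_sigma_finite)
    show "sets (\<eta>B \<Otimes>\<^sub>M \<eta>A) = sets (distr M (\<eta>B \<Otimes>\<^sub>M \<eta>A) \<pi>)" by simp
    fix a b assume a: "a \<in> sets \<eta>B" and b: "b \<in> sets \<eta>A"
    obtain D1 where D1: "D1 \<in> inv_sets M B" "AE x in M. (\<pi>B x \<in> a) = (x \<in> D1)"
      using realize_a[OF fm \<pi>Bm invBs EB(4) a] by blast
    obtain D2 where D2: "D2 \<in> inv_sets M A" "AE x in M. (\<pi>A x \<in> b) = (x \<in> D2)"
      using realize_a[OF fm \<pi>Am invAs EA(4) b] by blast
    have D1m: "D1 \<in> sets M" and D2m: "D2 \<in> sets M" using D1 D2 invAs invBs by auto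
    have am: "\<pi>B -` a \<inter> space M \<in> sets M" using measurable_sets[OF \<pi>Bm a] .
    have bm: "\<pi>A -` b \<inter> space M \<in> sets M" using measurable_sets[OF \<pi>Am b] .
    have abP: "a \<times> b \<in> sets (\<eta>B \<Otimes>\<^sub>M \<eta>A)" using a b by (rule pair_measureI)
    have "emeasure (distr M (\<eta>B \<Otimes>\<^sub>M \<eta>A) \<pi>) (a \<times> b) = emeasure M (\<pi> -` (a \<times> b) \<inter> space M)"
      using \<pi>m abP unfolding P_def by (simp add: emeasure_distr)
    also have "\<dots> = emeasure M (D1 \<inter> D2)"
    proof (rule emeasure_eq_AE)
      show "AE x in M. (x \<in> \<pi> -` (a \<times> b) \<inter> space M) = (x \<in> D1 \<inter> D2)"
        using D1(2) D2(2) AE_space by eventually_elim (auto simp: \<pi>_def)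
      show "\<pi> -` (a \<times> b) \<inter> space M \<in> sets M" using measurable_sets[OF \<pi>m] abP unfolding P_def by blast
      show "D1 \<inter> D2 \<in> sets M" using D1m D2m by blast
    qed
    also have "\<dots> = ennreal (measure M D1 * measure M D2)"
      using PS.indep[OF erg D1(1) D2(1)] D1m D2m by (simp add: PS.emeasure_eq_measure)
    also have "\<dots> = emeasure M D1 * emeasure M D2"
      by (simp add: PS.emeasure_eq_measure ennreal_mult)
    also have "emeasure M D1 = emeasure M (\<pi>B -` a \<inter> space M)"
      by (rule emeasure_eq_AE[OF _ D1m am]) (use D1(2) AE_space in \<open>eventually_elim, auto\<close>)
    also have "\<dots> = emeasure \<eta>B a" using dB a \<pi>Bm by (metis emeasure_distr)
    also have "emeasure M D2 = emeasure M (\<pi>A -` b \<inter> space M)"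
      by (rule emeasure_eq_AE[OF _ D2m bm]) (use D2(2) AE_space in \<open>eventually_elim, auto\<close>)
    also have "\<dots> = emeasure \<eta>A b" using dA b \<pi>Am by (metis emeasure_distr)
    finally show "emeasure \<eta>B a * emeasure \<eta>A b = emeasure (distr M (\<eta>B \<Otimes>\<^sub>M \<eta>A) \<pi>) (a \<times> b)" by simp
  qed
  have mp\<Psi>: "mp_map N P \<Psi>"
  proof -
    have "distr N P \<Psi> = distr (distr M N \<Phi>) P \<Psi>" using dN by simp
    also have "\<dots> = distr M P (\<Psi> \<circ> \<Phi>)" by (rule distr_distr[OF \<Psi>N \<Phi>m])
    also have "\<dots> = distr M P \<pi>"
      by (rule distr_cong_AE) (use \<Psi>\<Phi> measurable_comp[OF \<Phi>m \<Psi>N] \<pi>m in auto)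
    finally show ?thesis unfolding mp_map_def using \<Psi>N d\<pi> by simp
  qed
  have mp\<Psi>': "mp_map P N \<Psi>'"
  proof -
    have "distr P N \<Psi>' = distr (distr M P \<pi>) N \<Psi>'" using d\<pi> by simp
    also have "\<dots> = distr M N (\<Psi>' \<circ> \<pi>)" by (rule distr_distr[OF \<Psi>'N \<pi>m])
    also have "\<dots> = distr M N \<Phi>"
      by (rule distr_cong_AE) (use \<Psi>'\<pi> measurable_comp[OF \<pi>m \<Psi>'N] \<Phi>m in auto)
    finally show ?thesis unfolding mp_map_def using \<Psi>'N dN by simp
  qed
  have inv1: "AE y in N. \<Psi>' (\<Psi> y) = y"
  proof -
    have "AE x in M. \<Psi>' (\<Psi> (\<Phi> x)) = \<Phi> x" using \<Psi>\<Phi> \<Psi>'\<pi> by eventually_elim simp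
    moreover have "{y \<in> space N. \<Psi>' (\<Psi> y) = y} \<in> sets N"
    proof (rule measurable_equality_set)
      show "(\<lambda>y. \<Psi>' (\<Psi> y)) \<in> borel_measurable N"
        using measurable_comp[OF \<Psi>N \<Psi>'N, unfolded comp_def eqN] .
      show "(\<lambda>y. y) \<in> borel_measurable N" by (rule measurable_ident_sets[OF sN])
    qed
    ultimately show ?thesis by (rule AE_transfer[OF \<Phi>m dN])
  qed
  have inv2: "AE z in P. \<Psi> (\<Psi>' z) = z"
  proof -
    have "AE x in M. \<Psi> (\<Psi>' (\<pi> x)) = \<pi> x" using \<Psi>\<Phi> \<Psi>'\<pi> by eventually_elim simp
    moreover have "{z \<in> space P. \<Psi> (\<Psi>' z) = z} \<in> sets P"
    proof (rule measurable_equality_set)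
      show "(\<lambda>y. \<Psi> (\<Psi>' y)) \<in> borel_measurable P"
        using measurable_comp[OF \<Psi>'N \<Psi>N, unfolded comp_def eqP] .
      show "(\<lambda>y. y) \<in> borel_measurable P" by (rule measurable_ident_sets[OF sP])
    qed
    ultimately show ?thesis by (rule AE_transfer[OF \<pi>m d\<pi>])
  qed
  have isoinv: "\<exists>\<Psi>'. mp_map P N \<Psi>' \<and> (AE y in N. \<Psi>' (\<Psi> y) = y) \<and> (AE z in P. \<Psi> (\<Psi>' z) = z)"
    using mp\<Psi>' inv1 inv2 by blast
  have fstm: "(\<lambda>y. fst (\<Psi> y)) \<in> measurable N \<eta>B"
    using measurable_comp[OF \<Psi>N[unfolded P_def] measurable_fst] by (simp add: comp_def)
  have sndm: "(\<lambda>y. snd (\<Psi> y)) \<in> measurable N \<eta>A"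
    using measurable_comp[OF \<Psi>N[unfolded P_def] measurable_snd] by (simp add: comp_def)
  have eqG: "AE y in N. \<Psi> (C g y) = local_prod_G AB g (\<Psi> y)" for g
  proof -
    have Cg: "C g \<in> measurable N N" using SY(2) unfolding pmp_pair_action_def pmp_action_def mp_map_def by blast
    have ABg: "AB g \<in> measurable \<eta>B \<eta>B" using EB(2) unfolding pmp_action_def mp_map_def by blast
    have lp: "local_prod_G AB g z = (AB g (fst z), snd z)" for z by (cases z) (simp add: local_prod_G_def)
    have "AE x in M. \<Psi> (C g (\<Phi> x)) = local_prod_G AB g (\<Psi> (\<Phi> x))"
    proof -
      have a1: "AE x in M. \<Phi> (A g x) = C g (\<Phi> x)" using SY(3) unfolding factor_map_def by blast
      have a2: "AE x in M. \<Psi> (\<Phi> (A g x)) = \<pi> (A g x)" by (rule mp_AE[OF PS.IA.Amp \<Psi>\<Phi>])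
      have a3: "AE x in M. \<pi>B (A g x) = AB g (\<pi>B x)" using EB(3) unfolding factor_map_def by blast
      have a4: "AE x in M. \<pi>A (A g x) = \<pi>A x" by (rule PS.IA.inv_const[OF \<pi>Am sA EA(4)])
      show ?thesis using a1 a2 a3 a4 \<Psi>\<Phi> by eventually_elim (auto simp: \<pi>_def lp)
    qed
    moreover have "{y \<in> space N. \<Psi> (C g y) = local_prod_G AB g (\<Psi> y)} \<in> sets N"
    proof (rule measurable_equality_set)
      show "(\<lambda>y. \<Psi> (C g y)) \<in> borel_measurable N"
        using measurable_comp[OF Cg \<Psi>N, unfolded comp_def eqP] .
      have "(\<lambda>y. (AB g (fst (\<Psi> y)), snd (\<Psi> y))) \<in> measurable N P"
        unfolding P_def by (rule measurable_Pair[OF measurable_comp[OF fstm ABg, unfolded comp_def] sndm])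
      then show "(\<lambda>y. local_prod_G AB g (\<Psi> y)) \<in> borel_measurable N"
        unfolding eqP lp .
    qed
    ultimately show ?thesis by (rule AE_transfer[OF \<Phi>m dN])
  qed
  have eqH: "AE y in N. \<Psi> (D h y) = local_prod_H BA h (\<Psi> y)" for h
  proof -
    have Dh: "D h \<in> measurable N N" using SY(2) unfolding pmp_pair_action_def pmp_action_def mp_map_def by blast
    have BAh: "BA h \<in> measurable \<eta>A \<eta>A" using EA(2) unfolding pmp_action_def mp_map_def by blast
    have lp: "local_prod_H BA h z = (fst z, BA h (snd z))" for z by (cases z) (simp add: local_prod_H_def)
    have "AE x in M. \<Psi> (D h (\<Phi> x)) = local_prod_H BA h (\<Psi> (\<Phi> x))"
    proof -
      have a1: "AE x in M. \<Phi> (B h x) = D h (\<Phi> x)" using SY(4) unfolding factor_map_def by blast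
      have a2: "AE x in M. \<Psi> (\<Phi> (B h x)) = \<pi> (B h x)" by (rule mp_AE[OF PS.IB.Amp \<Psi>\<Phi>])
      have a3: "AE x in M. \<pi>A (B h x) = BA h (\<pi>A x)" using EA(3) unfolding factor_map_def by blast
      have a4: "AE x in M. \<pi>B (B h x) = \<pi>B x" by (rule PS.IB.inv_const[OF \<pi>Bm sB EB(4)])
      show ?thesis using a1 a2 a3 a4 \<Psi>\<Phi> by eventually_elim (auto simp: \<pi>_def lp)
    qed
    moreover have "{y \<in> space N. \<Psi> (D h y) = local_prod_H BA h (\<Psi> y)} \<in> sets N"
    proof (rule measurable_equality_set)
      show "(\<lambda>y. \<Psi> (D h y)) \<in> borel_measurable N"
        using measurable_comp[OF Dh \<Psi>N, unfolded comp_def eqP] .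
      have "(\<lambda>y. (fst (\<Psi> y), BA h (snd (\<Psi> y)))) \<in> measurable N P"
        unfolding P_def by (rule measurable_Pair[OF fstm measurable_comp[OF sndm BAh, unfolded comp_def]])
      then show "(\<lambda>y. local_prod_H BA h (\<Psi> y)) \<in> borel_measurable N"
        unfolding eqP lp .
    qed
    ultimately show ?thesis by (rule AE_transfer[OF \<Phi>m dN])
  qed
  have "action_iso N C P (local_prod_G AB) \<Psi>"
    unfolding action_iso_def factor_map_def using mp\<Psi> eqG isoinv by blast
  moreover have "action_iso N D P (local_prod_H BA) \<Psi>"
    unfolding action_iso_def factor_map_def using mp\<Psi> eqH isoinv by blast
  moreover have "AE x in M. \<Psi> (\<Phi> x) = (\<pi>B x, \<pi>A x)" using \<Psi>\<Phi> unfolding \<pi>_def .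
  ultimately show ?thesis unfolding P_def by blast
qed



end
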